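(* Let $\mathcal{G}$ be an ultragraph and suppose there exists $n\geq1$ such that $X_1,\dots,X_n\neq\emptyset$ and $\big(\bigcup_{e\in\mathcal{G}^1}r(e)\big)\cup s(\mathcal{G}^1)=\bigcup_{i=1}^n(\overline{X_i}\cup I_i)$. Let $R$ be a field, $N$ an $R$-vector space and $\pi:L_R(\mathcal{G})\to\mathrm{Hom}_R(N)$ a representation, and suppose that $N_{r(e)}=\bigoplus_{v\in r(e)}N_v$ for each $e\in\mathcal{G}^1$. Let $M=\pi(L_R(\mathcal{G}))(N)$ and let $\widetilde{\pi}:L_R(\mathcal{G})\to\mathrm{Hom}_R(M)$ be the restriction of $\pi$. If $N_v=\bigoplus_{e\in s^{-1}(v)}N_e$ for each vertex $v$ which is not a sink, then $\widetilde{\pi}$ is equivalent to a representation induced by some $\mathcal{G}$-algebraic branching system.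
   Context: An ultragraph $\mathcal{G}=(G^0,\mathcal{G}^1,r,s)$ consists of sets $G^0$, $\mathcal{G}^1$, a map $s:\mathcal{G}^1\to G^0$ and a map $r:\mathcal{G}^1\to P(G^0)\setminus\{\emptyset\}$. $\mathcal{G}^0$ is the smallest subset of $P(G^0)$ containing $\{v\}$ ($v\in G^0$) and $r(e)$ ($e\in\mathcal{G}^1$), closed under finite unions and intersections; write $p_v=p_{\{v\}}$, $D_v=D_{\{v\}}$. A vertex $v$ is a sink if $s^{-1}(v)=\emptyset$. $L_R(\mathcal{G})$ is the universal $R$-algebra generated by $\{s_e,s_e^*:e\in\mathcal{G}^1\}\cup\{p_A:A\in\mathcal{G}^0\}$ subject to: (1) $p_\emptyset=0$, $p_Ap_B=p_{A\cap B}$, $p_{A\cup B}=p_A+p_B-p_{A\cap B}$; (2) $p_{s(e)}s_e=s_ep_{r(e)}=s_e$, $p_{r(e)}s_e^*=s_e^*p_{s(e)}=s_e^*$; (3) $s_e^*s_f=\delta_{e,f}p_{r(e)}$; (4) $p_v=\sum_{s(e)=v}s_es_e^*$ whenever $0<|s^{-1}(v)|<\infty$. For $\pi$ as in the claim, $N_A=\pi(p_A)(N)$, $N_v=N_{\{v\}}$, $N_e=\pi(s_es_e^* )(N)$. Extreme vertices: for an ultragraph, an extreme vertex is a set $A\in r(\mathcal{G}^1)\cup\{\{s(e)\}:e\in\mathcal{G}^1\}$ such that either $A=r(e)$ for some edge $e$ and $A\cap\bigcup_{f\neq e}r(f)=\emptyset=A\cap s(\mathcal{G}^1)$, or $A=\{s(e)\}$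 for some edge $e$ and $A\cap s(\mathcal{G}^1\setminus\{e\})=\emptyset=A\cap\bigcup_{f\in\mathcal{G}^1}r(f)$; this $e$ is the extreme edge of $A$. The isolated vertices of an ultragraph are the vertices lying in no $r(e)$ and not equal to any $s(e)$. Inductive construction: $I_0$ = isolated vertices of $\mathcal{G}$, $\mathbb{G}_0=(G^0\setminus I_0,\mathcal{G}^1,r,s)$; $X_1,Y_1$ = extreme vertices and extreme edges of $\mathbb{G}_0$, $\overline{X_1}=\bigcup_{A\in X_1}A$; $I_1$ = isolated vertices of $(G^0\setminus(I_0\cup\overline{X_1}),\mathcal{G}^1\setminus Y_1,r,s)$ and $\mathbb{G}_1=(G^0\setminus(I_0\cup I_1\cup\overline{X_1}),\mathcal{G}^1\setminus Y_1,r,s)$. In general, while $X_k\neq\emptyset$, $X_{k+1},Y_{k+1}$ are the extreme vertices and extreme edges of $\mathbb{G}_k$, $\overline{X_{k+1}}=\bigcup_{A\in X_{k+1}}A$, $I_{k+1}$ is the set of isolated vertices of $(G^0\setminus(I_0\cup\dots\cup I_k\cup\overline{X_1}\cup\dots\cup\overline{X_{k+1}}),\mathcal{G}^1\setminus(Y_1\cup\dots\cup Y_{k+1}),r,s)$, and $\mathbb{G}_{k+1}$ is this ultragraph with the vertices of $I_{k+1}$ also removed. A $\mathcal{G}$-algebraic branching system on a set $X$ is a family of subsets $R_e,D_A\subseteq X$ and maps $f_e$ with: (i) $R_e\cap R_f=\emptyset$ for $e\neq f$; (ii) $D_\emptyset=\emptyset$, $D_A\cap D_B=D_{A\cap B}$,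 $D_A\cup D_B=D_{A\cup B}$; (iii) $R_e\subseteq D_{s(e)}$; (iv) $D_v=\bigcup_{e\in s^{-1}(v)}R_e$ whenever $0<|s^{-1}(v)|<\infty$; (v) $f_e:D_{r(e)}\to R_e$ is a bijection. The representation induced by it acts on the $R$-module $M'$ of maps $X\to R$ (all maps, or those with finite support) by $\pi'(s_e)(\phi)(x)=\phi(f_e^{-1}(x))$ for $x\in R_e$ and $0$ otherwise, $\pi'(s_e^* )(\phi)(x)=\phi(f_e(x))$ for $x\in D_{r(e)}$ and $0$ otherwise, $\pi'(p_A)(\phi)=1_{D_A}\phi$. Two representations $\rho:L_R(\mathcal{G})\to\mathrm{Hom}_R(M)$, $\rho':L_R(\mathcal{G})\to\mathrm{Hom}_R(M')$ are equivalent if there is an $R$-module isomorphism $T:M\to M'$ with $T\circ\rho(a)=\rho'(a)\circ T$ for all $a$. *)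

theory Defs
  imports Complex_Main
begin

text \<open>An ultragraph is given by a vertex set G0, an edge set G1, a range map r
  and a source map s (the maps are total functions, only their values on G1 matter).\<close>

definition ultragraph :: "'v set \<Rightarrow> 'e set \<Rightarrow> ('e \<Rightarrow> 'v set) \<Rightarrow> ('e \<Rightarrow> 'v) \<Rightarrow> bool" where
  "ultragraph G0 G1 r s \<longleftrightarrow> (\<forall>e\<in>G1. s e \<in> G0 \<and> r e \<subseteq> G0 \<and> r e \<noteq> {})"

text \<open>The family \<open>\<G>^0\<close>: smallest family containing the singletons, the ranges,
  and closed under finite unions and intersections (the empty union gives the empty set).\<close>

inductive_set gen0 :: "'v set \<Rightarrow> 'e set \<Rightarrow> ('e \<Rightarrow> 'v set) \<Rightarrow> 'v set set"
  for G0 :: "'v set" and G1 :: "'e set" and r :: "'e \<Rightarrow> 'v set" where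
  empty: "{} \<in> gen0 G0 G1 r"
| vert: "v \<in> G0 \<Longrightarrow> {v} \<in> gen0 G0 G1 r"
| rng: "e \<in> G1 \<Longrightarrow> r e \<in> gen0 G0 G1 r"
| un: "A \<in> gen0 G0 G1 r \<Longrightarrow> B \<in> gen0 G0 G1 r \<Longrightarrow> A \<union> B \<in> gen0 G0 G1 r"
| int: "A \<in> gen0 G0 G1 r \<Longrightarrow> B \<in> gen0 G0 G1 r \<Longrightarrow> A \<inter> B \<in> gen0 G0 G1 r"

definition isolated :: "'v set \<Rightarrow> 'e set \<Rightarrow> ('e \<Rightarrow> 'v set) \<Rightarrow> ('e \<Rightarrow> 'v) \<Rightarrow> 'v set" where
  "isolated V E r s = {v \<in> V. v \<notin> (\<Union>e\<in>E. r e) \<and> v \<notin> s ` E}"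

definition extreme :: "'e set \<Rightarrow> ('e \<Rightarrow> 'v set) \<Rightarrow> ('e \<Rightarrow> 'v) \<Rightarrow> 'v set \<Rightarrow> 'e \<Rightarrow> bool" where
  "extreme E r s A e \<longleftrightarrow> e \<in> E \<and>
     ((A = r e \<and> A \<inter> (\<Union>f\<in>E - {e}. r f) = {} \<and> A \<inter> s ` E = {})
    \<or> (A = {s e} \<and> A \<inter> s ` (E - {e}) = {} \<and> A \<inter> (\<Union>f\<in>E. r f) = {}))"

definition extreme_vertices :: "'e set \<Rightarrow> ('e \<Rightarrow> 'v set) \<Rightarrow> ('e \<Rightarrow> 'v) \<Rightarrow> 'v set set" where
  "extreme_vertices E r s = {A. \<exists>e. extreme E r s A e}"

definition extreme_edges :: "'e set \<Rightarrow> ('e \<Rightarrow> 'v set) \<Rightarrow> ('e \<Rightarrow> 'v) \<Rightarrow> 'e set" where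
  "extreme_edges E r s = {e. \<exists>A. extreme E r s A e}"

text \<open>\<open>stage G0 G1 r s k\<close> = (vertex set, edge set) of the ultragraph \<open>\<bbbG>_k\<close>.\<close>
fun stage :: "'v set \<Rightarrow> 'e set \<Rightarrow> ('e \<Rightarrow> 'v set) \<Rightarrow> ('e \<Rightarrow> 'v) \<Rightarrow> nat \<Rightarrow> 'v set \<times> 'e set" where
  "stage G0 G1 r s 0 = (G0 - isolated G0 G1 r s, G1)"
| "stage G0 G1 r s (Suc k) =
     (let V = fst (stage G0 G1 r s k); E = snd (stage G0 G1 r s k);
          V1 = V - \<Union>(extreme_vertices E r s); E1 = E - extreme_edges E r s
      in (V1 - isolated V1 E1 r s, E1))"

text \<open>\<open>Xk \<dots> k\<close> = X_k (for k \<ge> 1), the extreme vertices of \<open>\<bbbG>_{k-1}\<close>.\<close>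
definition Xk :: "'v set \<Rightarrow> 'e set \<Rightarrow> ('e \<Rightarrow> 'v set) \<Rightarrow> ('e \<Rightarrow> 'v) \<Rightarrow> nat \<Rightarrow> 'v set set" where
  "Xk G0 G1 r s k = extreme_vertices (snd (stage G0 G1 r s (k - 1))) r s"

fun Ik :: "'v set \<Rightarrow> 'e set \<Rightarrow> ('e \<Rightarrow> 'v set) \<Rightarrow> ('e \<Rightarrow> 'v) \<Rightarrow> nat \<Rightarrow> 'v set" where
  "Ik G0 G1 r s 0 = isolated G0 G1 r s"
| "Ik G0 G1 r s (Suc k) =
     (let V = fst (stage G0 G1 r s k); E = snd (stage G0 G1 r s k)
      in isolated (V - \<Union>(extreme_vertices E r s)) (E - extreme_edges E r s) r s)"

text \<open>By the universal property of \<open>L_R(\<G>)\<close>, a representation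
  \<open>\<pi> : L_R(\<G>) \<rightarrow> Hom_R(N)\<close> is the same as a family of R-linear maps
  \<open>S e = \<pi>(s_e)\<close>, \<open>Sa e = \<pi>(s_e^*)\<close>, \<open>P A = \<pi>(p_A)\<close> (A \<in> \<G>^0) satisfying relations (1)-(4).\<close>

definition lpa_rep ::
  "('r::field \<Rightarrow> 'n::ab_group_add \<Rightarrow> 'n) \<Rightarrow> 'v set \<Rightarrow> 'e set \<Rightarrow> ('e \<Rightarrow> 'v set) \<Rightarrow> ('e \<Rightarrow> 'v)
   \<Rightarrow> ('e \<Rightarrow> 'n \<Rightarrow> 'n) \<Rightarrow> ('e \<Rightarrow> 'n \<Rightarrow> 'n) \<Rightarrow> ('v set \<Rightarrow> 'n \<Rightarrow> 'n) \<Rightarrow> bool" where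
  "lpa_rep scale G0 G1 r s S Sa P \<longleftrightarrow>
     (\<forall>e\<in>G1. Vector_Spaces.linear scale scale (S e) \<and> Vector_Spaces.linear scale scale (Sa e)) \<and>
     (\<forall>A\<in>gen0 G0 G1 r. Vector_Spaces.linear scale scale (P A)) \<and>
     \<comment> \<open>(1)\<close>
     P {} = (\<lambda>x. 0) \<and>
     (\<forall>A\<in>gen0 G0 G1 r. \<forall>B\<in>gen0 G0 G1 r. P A \<circ> P B = P (A \<inter> B)) \<and>
     (\<forall>A\<in>gen0 G0 G1 r. \<forall>B\<in>gen0 G0 G1 r.
        \<forall>x. P (A \<union> B) x = P A x + P B x - P (A \<inter> B) x) \<and>
     \<comment> \<open>(2)\<close>
     (\<forall>e\<in>G1. P {s e} \<circ> S e = S e \<and> S e \<circ> P (r e) = S e \<and>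
              P (r e) \<circ> Sa e = Sa e \<and> Sa e \<circ> P {s e} = Sa e) \<and>
     \<comment> \<open>(3)\<close>
     (\<forall>e\<in>G1. \<forall>f\<in>G1. Sa e \<circ> S f = (if e = f then P (r e) else (\<lambda>x. 0))) \<and>
     \<comment> \<open>(4)\<close>
     (\<forall>v\<in>G0. 0 < card {e\<in>G1. s e = v} \<longrightarrow>
        (\<forall>x. P {v} x = (\<Sum>e\<in>{e\<in>G1. s e = v}. S e (Sa e x))))"

text \<open>The image \<open>\<pi>(L_R(\<G>))\<close>: the (non-unital) subalgebra of operators generated by the
  images of the generators.\<close>
inductive_set rep_image ::
  "('r::field \<Rightarrow> 'n::ab_group_add \<Rightarrow> 'n) \<Rightarrow> 'v set \<Rightarrow> 'e set \<Rightarrow> ('e \<Rightarrow> 'v set)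
   \<Rightarrow> ('e \<Rightarrow> 'n \<Rightarrow> 'n) \<Rightarrow> ('e \<Rightarrow> 'n \<Rightarrow> 'n) \<Rightarrow> ('v set \<Rightarrow> 'n \<Rightarrow> 'n) \<Rightarrow> ('n \<Rightarrow> 'n) set"
  for scale G0 G1 r S Sa P where
  gen_s: "e \<in> G1 \<Longrightarrow> S e \<in> rep_image scale G0 G1 r S Sa P"
| gen_sa: "e \<in> G1 \<Longrightarrow> Sa e \<in> rep_image scale G0 G1 r S Sa P"
| gen_p: "A \<in> gen0 G0 G1 r \<Longrightarrow> P A \<in> rep_image scale G0 G1 r S Sa P"
| comp: "a \<in> rep_image scale G0 G1 r S Sa P \<Longrightarrow> b \<in> rep_image scale G0 G1 r S Sa P
          \<Longrightarrow> a \<circ> b \<in> rep_image scale G0 G1 r S Sa P"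
| add: "a \<in> rep_image scale G0 G1 r S Sa P \<Longrightarrow> b \<in> rep_image scale G0 G1 r S Sa P
          \<Longrightarrow> (\<lambda>x. a x + b x) \<in> rep_image scale G0 G1 r S Sa P"
| smult: "a \<in> rep_image scale G0 G1 r S Sa P
          \<Longrightarrow> (\<lambda>x. scale c (a x)) \<in> rep_image scale G0 G1 r S Sa P"

definition rep_module where
  "rep_module scale G0 G1 r S Sa P =
     module.span scale {a x |a x. a \<in> rep_image scale G0 G1 r S Sa P}"

definition internal_direct_sum :: "('r::field \<Rightarrow> 'n::ab_group_add \<Rightarrow> 'n) \<Rightarrow> 'n set \<Rightarrow> 'i set \<Rightarrow> ('i \<Rightarrow> 'n set) \<Rightarrow> bool" where
  "internal_direct_sum scale W I F \<longleftrightarrow>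
     W = module.span scale (\<Union>i\<in>I. F i) \<and>
     (\<forall>J w. J \<subseteq> I \<longrightarrow> finite J \<longrightarrow> (\<forall>i\<in>J. w i \<in> F i) \<longrightarrow> (\<Sum>i\<in>J. w i) = 0 \<longrightarrow> (\<forall>i\<in>J. w i = 0))"

definition branching_system ::
  "'v set \<Rightarrow> 'e set \<Rightarrow> ('e \<Rightarrow> 'v set) \<Rightarrow> ('e \<Rightarrow> 'v) \<Rightarrow> 'x set
   \<Rightarrow> ('e \<Rightarrow> 'x set) \<Rightarrow> ('v set \<Rightarrow> 'x set) \<Rightarrow> ('e \<Rightarrow> 'x \<Rightarrow> 'x) \<Rightarrow> bool" where
  "branching_system G0 G1 r s X Rg D f \<longleftrightarrow>
     (\<forall>e\<in>G1. Rg e \<subseteq> X) \<and> (\<forall>A\<in>gen0 G0 G1 r. D A \<subseteq> X) \<and>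
     (\<forall>e\<in>G1. \<forall>e'\<in>G1. e \<noteq> e' \<longrightarrow> Rg e \<inter> Rg e' = {}) \<and>
     D {} = {} \<and>
     (\<forall>A\<in>gen0 G0 G1 r. \<forall>B\<in>gen0 G0 G1 r. D A \<inter> D B = D (A \<inter> B) \<and> D A \<union> D B = D (A \<union> B)) \<and>
     (\<forall>e\<in>G1. Rg e \<subseteq> D {s e}) \<and>
     (\<forall>v\<in>G0. 0 < card {e\<in>G1. s e = v} \<longrightarrow> D {v} = (\<Union>e\<in>{e\<in>G1. s e = v}. Rg e)) \<and>
     (\<forall>e\<in>G1. bij_betw (f e) (D (r e)) (Rg e))"

definition fin_maps :: "'x set \<Rightarrow> ('x \<Rightarrow> 'r::zero) set" where
  "fin_maps X = {\<phi>. (\<forall>x. x \<notin> X \<longrightarrow> \<phi> x = 0) \<and> finite {x. \<phi> x \<noteq> 0}}"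

definition ind_s :: "('e \<Rightarrow> 'x set) \<Rightarrow> ('v set \<Rightarrow> 'x set) \<Rightarrow> ('e \<Rightarrow> 'v set) \<Rightarrow> ('e \<Rightarrow> 'x \<Rightarrow> 'x)
   \<Rightarrow> 'e \<Rightarrow> ('x \<Rightarrow> 'r::zero) \<Rightarrow> ('x \<Rightarrow> 'r)" where
  "ind_s Rg D r f e \<phi> = (\<lambda>x. if x \<in> Rg e then \<phi> (the_inv_into (D (r e)) (f e) x) else 0)"

definition ind_sa :: "('v set \<Rightarrow> 'x set) \<Rightarrow> ('e \<Rightarrow> 'v set) \<Rightarrow> ('e \<Rightarrow> 'x \<Rightarrow> 'x)
   \<Rightarrow> 'e \<Rightarrow> ('x \<Rightarrow> 'r::zero) \<Rightarrow> ('x \<Rightarrow> 'r)" where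
  "ind_sa D r f e \<phi> = (\<lambda>x. if x \<in> D (r e) then \<phi> (f e x) else 0)"

definition ind_p :: "('v set \<Rightarrow> 'x set) \<Rightarrow> 'v set \<Rightarrow> ('x \<Rightarrow> 'r::zero) \<Rightarrow> ('x \<Rightarrow> 'r)" where
  "ind_p D A \<phi> = (\<lambda>x. if x \<in> D A then \<phi> x else 0)"

end

theory Submission
  imports Defs
begin


lemma E_Suc: "snd (stage G0 G1 r s (Suc k)) = snd (stage G0 G1 r s k) - extreme_edges (snd (stage G0 G1 r s k)) r s"
  by (simp add: Let_def)

lemma E_0: "snd (stage G0 G1 r s 0) = G1" by simp

lemma E_mono: "j \<le> k \<Longrightarrow> snd (stage G0 G1 r s k) \<subseteq> snd (stage G0 G1 r s j)"
proof (induction k rule: dec_induct)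
  case base then show ?case by simp
next
  case (step k) then show ?case using E_Suc[of G0 G1 r s k] by blast
qed

lemma Ik_Suc: "Ik G0 G1 r s (Suc k) = isolated (fst (stage G0 G1 r s k) - \<Union>(extreme_vertices (snd (stage G0 G1 r s k)) r s)) (snd (stage G0 G1 r s (Suc k))) r s"
  by (simp add: Let_def)

lemma all_gone:
  assumes cover: "(\<Union>e\<in>G1. r e) \<union> s ` G1 = (\<Union>i\<in>{1..n}. \<Union>(Xk G0 G1 r s i) \<union> Ik G0 G1 r s i)"
    and e: "e \<in> G1"
  shows "e \<notin> snd (stage G0 G1 r s n)"
proof
  assume en: "e \<in> snd (stage G0 G1 r s n)"
  have "s e \<in> (\<Union>i\<in>{1..n}. \<Union>(Xk G0 G1 r s i) \<union> Ik G0 G1 r s i)" using cover e by blast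
  then obtain i where i: "i \<in> {1..n}" "s e \<in> \<Union>(Xk G0 G1 r s i) \<union> Ik G0 G1 r s i" by blast
  then obtain j where j: "i = Suc j" by (cases i) auto
  have eSj: "e \<in> snd (stage G0 G1 r s (Suc j))" using E_mono[of "Suc j" n G0 G1 r s] i j en by auto
  have ej: "e \<in> snd (stage G0 G1 r s j)" using E_mono[of j "Suc j" G0 G1 r s] eSj by auto
  show False
  proof (cases "s e \<in> Ik G0 G1 r s i")
    case True
    then show False using eSj unfolding j Ik_Suc isolated_def by blast
  next
    case False
    then have "s e \<in> \<Union>(Xk G0 G1 r s i)" using i by blast
    then obtain A e' where A: "s e \<in> A" "extreme (snd (stage G0 G1 r s j)) r s A e'"
      unfolding Xk_def extreme_vertices_def j by auto
    show False
    proof (cases "e = e'")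
      case True
      then have "e \<in> extreme_edges (snd (stage G0 G1 r s j)) r s" using A unfolding extreme_edges_def by blast
      then show False using eSj unfolding E_Suc by blast
    next
      case False
      then show False using A ej unfolding extreme_def by blast
    qed
  qed
qed

context
  fixes G0 :: "'v set" and G1 :: "'e set" and r :: "'e \<Rightarrow> 'v set" and s :: "'e \<Rightarrow> 'v" and n :: nat
  assumes gone: "\<And>e. e \<in> G1 \<Longrightarrow> e \<notin> snd (stage G0 G1 r s n)"
begin

definition kk :: "'e \<Rightarrow> nat" where "kk e = (LEAST k. e \<notin> snd (stage G0 G1 r s k))"

lemma kk_le: "e \<notin> snd (stage G0 G1 r s j) \<Longrightarrow> kk e \<le> j"
  unfolding kk_def by (rule Least_le)

lemma kk_props:
  assumes e: "e \<in> G1"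
  shows "kk e \<le> n" "1 \<le> kk e" "e \<in> snd (stage G0 G1 r s (kk e - 1))"
    "e \<in> extreme_edges (snd (stage G0 G1 r s (kk e - 1))) r s"
proof -
  show "kk e \<le> n" using kk_le gone e by blast
  have ne: "e \<notin> snd (stage G0 G1 r s (kk e))"
    unfolding kk_def by (rule LeastI[of _ n]) (use gone e in blast)
  show "1 \<le> kk e" using ne e by (cases "kk e") auto
  then obtain j where j: "kk e = Suc j" by (cases "kk e") auto
  have "e \<in> snd (stage G0 G1 r s j)"
  proof (rule ccontr)
    assume "e \<notin> snd (stage G0 G1 r s j)"
    then have "kk e \<le> j" by (rule kk_le)
    then show False using j by simp
  qed
  then show "e \<in> snd (stage G0 G1 r s (kk e - 1))" using j by simp
  then show "e \<in> extreme_edges (snd (stage G0 G1 r s (kk e - 1))) r s"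
    using ne j E_Suc[of G0 G1 r s j] by auto
qed

definition T1 :: "'e \<Rightarrow> bool" where
  "T1 e \<longleftrightarrow> r e \<inter> s ` snd (stage G0 G1 r s (kk e - 1)) = {}"

lemma notT1:
  assumes e: "e \<in> G1" and nt: "\<not> T1 e"
  shows "s e \<notin> (\<Union>f\<in>snd (stage G0 G1 r s (kk e - 1)). r f)"
proof -
  obtain A where A: "extreme (snd (stage G0 G1 r s (kk e - 1))) r s A e"
    using kk_props(4)[OF e] unfolding extreme_edges_def by blast
  show ?thesis using A nt unfolding extreme_def T1_def by auto
qed

definition nuA :: "'e \<Rightarrow> nat" where
  "nuA e = (if T1 e then kk e else 2 * n + 1 - kk e)"

lemma nuA_dec:
  assumes e: "e \<in> G1" and e': "e' \<in> G1" and se': "s e' \<in> r e"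
  shows "nuA e' < nuA e"
proof -
  note pe = kk_props[OF e] and pe' = kk_props[OF e']
  have a: "kk e' < kk e" if "T1 e"
  proof -
    have "e' \<notin> snd (stage G0 G1 r s (kk e - 1))" using that se' unfolding T1_def by blast
    then have "kk e' \<le> kk e - 1" by (rule kk_le)
    then show ?thesis using pe(2) by simp
  qed
  have b: "kk e < kk e'" if "\<not> T1 e'"
  proof -
    have "e \<notin> snd (stage G0 G1 r s (kk e' - 1))" using notT1[OF e' that] se' by blast
    then have "kk e \<le> kk e' - 1" by (rule kk_le)
    then show ?thesis using pe'(2) by simp
  qed
  show ?thesis
    using a b pe(1,2) pe'(1,2) unfolding nuA_def by (cases "T1 e"; cases "T1 e'") auto
qed

end



lemma linD: "Vector_Spaces.linear sc sc f \<Longrightarrow> module_hom sc sc f"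
  using module_hom_iff_linear by blast

context vector_space begin

lemma ds_basis:
  assumes ds: "internal_direct_sum scale W I F"
    and sub: "\<And>i. i \<in> I \<Longrightarrow> subspace (F i)"
    and B: "\<And>i. i \<in> I \<Longrightarrow> B i \<subseteq> F i \<and> \<not> dependent (B i) \<and> F i \<subseteq> span (B i)"
  shows "(\<Union>i\<in>I. B i) \<subseteq> W" "\<not> dependent (\<Union>i\<in>I. B i)" "W \<subseteq> span (\<Union>i\<in>I. B i)"
    "\<And>i j. i \<in> I \<Longrightarrow> j \<in> I \<Longrightarrow> i \<noteq> j \<Longrightarrow> B i \<inter> B j = {}"
proof -
  have W: "W = span (\<Union>i\<in>I. F i)" using ds unfolding internal_direct_sum_def by blast
  have indep: "\<And>J w. J \<subseteq> I \<Longrightarrow> finite J \<Longrightarrow> (\<forall>i\<in>J. w i \<in> F i) \<Longrightarrow> (\<Sum>i\<in>J. w i) = 0 \<Longrightarrow> (\<forall>i\<in>J. w i = 0)"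
    using ds unfolding internal_direct_sum_def by blast
  show "(\<Union>i\<in>I. B i) \<subseteq> W" unfolding W using B span_superset by fastforce
  have "(\<Union>i\<in>I. F i) \<subseteq> span (\<Union>i\<in>I. B i)"
  proof
    fix x assume "x \<in> (\<Union>i\<in>I. F i)"
    then obtain i where i: "i \<in> I" "x \<in> F i" by blast
    then have "x \<in> span (B i)" using B by blast
    moreover have "span (B i) \<subseteq> span (\<Union>i\<in>I. B i)" using i by (intro span_mono) blast
    ultimately show "x \<in> span (\<Union>i\<in>I. B i)" by blast
  qed
  then show "W \<subseteq> span (\<Union>i\<in>I. B i)" unfolding W by (intro span_minimal) auto
  show disj: "B i \<inter> B j = {}" if ij: "i \<in> I" "j \<in> I" "i \<noteq> j" for i j
  proof (rule ccontr)
    assume "B i \<inter> B j \<noteq> {}"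
    then obtain b where b: "b \<in> B i" "b \<in> B j" by blast
    have b0: "b \<noteq> 0" using B[OF ij(1)] b dependent_zero by blast
    define w where "w k = (if k = i then b else - b)" for k
    have "\<forall>k\<in>{i,j}. w k = 0"
    proof (rule indep)
      show "{i, j} \<subseteq> I" "finite {i,j}" using ij by auto
      show "\<forall>k\<in>{i, j}. w k \<in> F k" using B[OF ij(1)] B[OF ij(2)] b ij sub[OF ij(2)] subspace_neg
        unfolding w_def by auto
      show "(\<Sum>k\<in>{i, j}. w k) = 0" using ij unfolding w_def by simp
    qed
    then show False using b0 unfolding w_def by auto
  qed
  show "\<not> dependent (\<Union>i\<in>I. B i)"
    unfolding independent_explicit_module
  proof (intro allI impI)
    fix t u v assume t: "finite t" "t \<subseteq> (\<Union>i\<in>I. B i)" and su: "(\<Sum>v\<in>t. scale (u v) v) = 0" and v: "v \<in> t"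
    define idx where "idx b = (SOME i. i \<in> I \<and> b \<in> B i)" for b
    have idx: "idx b \<in> I \<and> b \<in> B (idx b)" if "b \<in> t" for b
      unfolding idx_def by (rule someI_ex) (use t that in blast)
    have idxu: "j = idx b" if "b \<in> t" "j \<in> I" "b \<in> B j" for b j
      using disj[of j "idx b"] idx[OF that(1)] that by blast
    define J where "J = idx ` t"
    define w where "w i = (\<Sum>x\<in>{x. x \<in> t \<and> idx x = i}. scale (u x) x)" for i
    have J: "J \<subseteq> I" "finite J" using t idx unfolding J_def by auto
    have "\<forall>i\<in>J. w i = 0"
    proof (rule indep[OF J])
      show "\<forall>i\<in>J. w i \<in> F i"
      proof
        fix i assume i: "i \<in> J"
        show "w i \<in> F i" unfolding w_def
        proof (rule subspace_sum)
          show "subspace (F i)" using sub J i by blast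
          fix x assume x: "x \<in> {x \<in> t. idx x = i}"
          then have "x \<in> F i" using idx[of x] B[of i] by auto
          then show "scale (u x) x \<in> F i" using subspace_scale sub J i by blast
        qed
      qed
      show "(\<Sum>i\<in>J. w i) = 0" unfolding w_def J_def
        using sum.group[OF t(1) _ subset_refl, of idx "\<lambda>x. scale (u x) x"] t su by simp
    qed
    then have "w (idx v) = 0" using v unfolding J_def by blast
    then have "(\<Sum>x\<in>{x. x \<in> t \<and> idx x = idx v}. scale (u x) x) = 0" unfolding w_def .
    moreover have "\<not> dependent (B (idx v))" using B idx[OF v] by blast
    moreover have "{x. x \<in> t \<and> idx x = idx v} \<subseteq> B (idx v)" using idx by (metis (mono_tags, lifting) mem_Collect_eq subsetI)
    ultimately show "u v = 0"
      using independentD[of "B (idx v)" "{x. x \<in> t \<and> idx x = idx v}" u v] t(1) v by auto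
  qed
qed

lemma rep_map:
  assumes X: "\<not> dependent X" and x: "x \<in> span X" and L: "module_hom scale scale L"
    and Q: "Q \<subseteq> X" and hQ: "h ` Q \<subseteq> X" and inj: "inj_on h Q"
    and Lz: "\<And>z. z \<in> X \<Longrightarrow> L z = (if z \<in> Q then h z else 0)"
  shows "representation X (L x) = (\<lambda>y. if y \<in> h ` Q then representation X x (the_inv_into Q h y) else 0)"
proof -
  define \<phi> where "\<phi> = representation X x"
  define F where "F = {b. \<phi> b \<noteq> 0}"
  have F: "finite F" "F \<subseteq> X" unfolding F_def \<phi>_def using finite_representation representation_ne_zero by auto
  have xs: "x = (\<Sum>b\<in>F. scale (\<phi> b) b)" unfolding F_def \<phi>_def using sum_nonzero_representation_eq[OF X x] by simp
  have "L x = (\<Sum>b\<in>F. scale (\<phi> b) (L b))"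
    by (subst xs) (simp add: module_hom.sum[OF L] module_hom.scale[OF L])
  also have "\<dots> = (\<Sum>b\<in>F. if b \<in> Q then scale (\<phi> b) (h b) else 0)"
    by (rule sum.cong) (use F Lz in auto)
  also have "\<dots> = (\<Sum>b\<in>F \<inter> Q. scale (\<phi> b) (h b))"
    by (simp add: sum.If_cases[OF F(1)] Int_def)
  finally have Lx: "L x = (\<Sum>b\<in>F \<inter> Q. scale (\<phi> b) (h b))" .
  define \<psi> where "\<psi> y = (if y \<in> h ` Q then \<phi> (the_inv_into Q h y) else 0)" for y
  have supp: "{y. \<psi> y \<noteq> 0} = h ` (F \<inter> Q)"
    unfolding \<psi>_def F_def using the_inv_into_f_f[OF inj] by force
  show ?thesis unfolding \<phi>_def[symmetric] \<psi>_def[symmetric]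
  proof (rule representation_eqI[OF X])
    show "L x \<in> span X" unfolding Lx
      by (intro span_sum span_scale span_base) (use hQ in auto)
    show "\<psi> b \<noteq> 0 \<Longrightarrow> b \<in> X" for b using supp hQ by blast
    show "finite {b. \<psi> b \<noteq> 0}" unfolding supp using F by simp
    have "(\<Sum>b | \<psi> b \<noteq> 0. scale (\<psi> b) b) = (\<Sum>b\<in>h ` (F \<inter> Q). scale (\<psi> b) b)" unfolding supp ..
    also have "\<dots> = (\<Sum>b\<in>F \<inter> Q. scale (\<psi> (h b)) (h b))"
      using inj_on_subset[OF inj, of "F \<inter> Q"] by (simp add: sum.reindex)
    also have "\<dots> = (\<Sum>b\<in>F \<inter> Q. scale (\<phi> b) (h b))"
      by (rule sum.cong) (auto simp: \<psi>_def the_inv_into_f_f[OF inj])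
    finally show "(\<Sum>b | \<psi> b \<noteq> 0. scale (\<psi> b) b) = L x" using Lx by simp
  qed
qed

end



locale lpa =
  fixes G0 :: "'v set" and G1 :: "'e set" and r :: "'e \<Rightarrow> 'v set" and s :: "'e \<Rightarrow> 'v"
    and scale :: "'r::field \<Rightarrow> 'n::ab_group_add \<Rightarrow> 'n"
    and S Sa :: "'e \<Rightarrow> 'n \<Rightarrow> 'n" and P :: "'v set \<Rightarrow> 'n \<Rightarrow> 'n" and nu :: "'e \<Rightarrow> nat"
  assumes ug: "ultragraph G0 G1 r s"
    and vs: "vector_space scale"
    and rep: "lpa_rep scale G0 G1 r s S Sa P"
    and range_sum: "\<forall>e\<in>G1. internal_direct_sum scale (range (P (r e))) (r e) (\<lambda>v. range (P {v}))"
    and source_sum: "\<forall>v\<in>G0. s -` {v} \<inter> G1 \<noteq> {} \<longrightarrow>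
        internal_direct_sum scale (range (P {v})) {e\<in>G1. s e = v} (\<lambda>e. range (S e \<circ> Sa e))"
    and nu_dec: "\<And>e e'. e \<in> G1 \<Longrightarrow> e' \<in> G1 \<Longrightarrow> s e' \<in> r e \<Longrightarrow> nu e' < nu e"
begin

sublocale V: vector_space scale by (rule vs)

lemma se_G0: "e \<in> G1 \<Longrightarrow> s e \<in> G0" using ug unfolding ultragraph_def by blast
lemma re_G0: "e \<in> G1 \<Longrightarrow> r e \<subseteq> G0" using ug unfolding ultragraph_def by blast

lemma g_v: "v \<in> G0 \<Longrightarrow> {v} \<in> gen0 G0 G1 r" by (rule gen0.vert)
lemma g_r: "e \<in> G1 \<Longrightarrow> r e \<in> gen0 G0 G1 r" by (rule gen0.rng)

lemma lS: "e \<in> G1 \<Longrightarrow> module_hom scale scale (S e)"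
  using rep linD unfolding lpa_rep_def by blast
lemma lSa: "e \<in> G1 \<Longrightarrow> module_hom scale scale (Sa e)"
  using rep linD unfolding lpa_rep_def by blast
lemma lP: "A \<in> gen0 G0 G1 r \<Longrightarrow> module_hom scale scale (P A)"
  using rep linD unfolding lpa_rep_def by blast

lemma P_empty: "P {} x = 0" using rep unfolding lpa_rep_def by simp

lemma PP: "A \<in> gen0 G0 G1 r \<Longrightarrow> B \<in> gen0 G0 G1 r \<Longrightarrow> P A (P B x) = P (A \<inter> B) x"
proof -
  assume "A \<in> gen0 G0 G1 r" "B \<in> gen0 G0 G1 r"
  then have "P A \<circ> P B = P (A \<inter> B)" using rep unfolding lpa_rep_def by blast
  then show ?thesis by (metis comp_apply)
qed

lemma Pun: "A \<in> gen0 G0 G1 r \<Longrightarrow> B \<in> gen0 G0 G1 r \<Longrightarrow> P (A \<union> B) x = P A x + P B x - P (A \<inter> B) x"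
  using rep unfolding lpa_rep_def by blast

lemma rel2:
  assumes e: "e \<in> G1"
  shows "P {s e} (S e x) = S e x" "S e (P (r e) x) = S e x" "P (r e) (Sa e x) = Sa e x" "Sa e (P {s e} x) = Sa e x"
proof -
  have "P {s e} \<circ> S e = S e \<and> S e \<circ> P (r e) = S e \<and> P (r e) \<circ> Sa e = Sa e \<and> Sa e \<circ> P {s e} = Sa e"
    using rep e unfolding lpa_rep_def by blast
  then show "P {s e} (S e x) = S e x" "S e (P (r e) x) = S e x" "P (r e) (Sa e x) = Sa e x" "Sa e (P {s e} x) = Sa e x"
    by (metis comp_apply)+
qed

lemma SaS: "e \<in> G1 \<Longrightarrow> f \<in> G1 \<Longrightarrow> Sa e (S f x) = (if e = f then P (r e) x else 0)"
proof -
  assume "e \<in> G1" "f \<in> G1"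
  then have "Sa e \<circ> S f = (if e = f then P (r e) else (\<lambda>x. 0))" using rep unfolding lpa_rep_def by blast
  then show ?thesis by (metis comp_apply)
qed

lemma proj: "A \<in> gen0 G0 G1 r \<Longrightarrow> z \<in> range (P A) \<Longrightarrow> P A z = z"
  using PP by auto

lemma sub_range: "module_hom scale scale f \<Longrightarrow> V.subspace (range f)"
  using module_hom.subspace_image[of scale scale f UNIV] V.subspace_UNIV by blast

lemma N_sub: "A \<in> gen0 G0 G1 r \<Longrightarrow> w \<in> A \<Longrightarrow> w \<in> G0 \<Longrightarrow> range (P {w}) \<subseteq> range (P A)"
proof
  fix z assume A: "A \<in> gen0 G0 G1 r" "w \<in> A" "w \<in> G0" and z: "z \<in> range (P {w})"
  then obtain y where y: "z = P {w} y" by blast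
  have "P A z = P (A \<inter> {w}) y" using PP[OF A(1) g_v[OF A(3)]] y by simp
  also have "A \<inter> {w} = {w}" using A by auto
  finally show "z \<in> range (P A)" using y by (metis rangeI)
qed

definition sink :: "'v \<Rightarrow> bool" where "sink v \<longleftrightarrow> (\<forall>e\<in>G1. s e \<noteq> v)"

definition Bs :: "'v \<Rightarrow> 'n set" where
  "Bs v = (SOME B. B \<subseteq> range (P {v}) \<and> \<not> V.dependent B \<and> range (P {v}) \<subseteq> V.span B)"

lemma Bs: "Bs v \<subseteq> range (P {v}) \<and> \<not> V.dependent (Bs v) \<and> range (P {v}) \<subseteq> V.span (Bs v)"
  unfolding Bs_def
proof (rule someI_ex)
  obtain B where "B \<subseteq> range (P {v})" "\<not> V.dependent B" "range (P {v}) \<subseteq> V.span B"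
    using V.basis_exists by metis
  then show "\<exists>B. B \<subseteq> range (P {v}) \<and> \<not> V.dependent B \<and> range (P {v}) \<subseteq> V.span B" by blast
qed

inductive_set BB :: "('v \<times> 'n) set" where
  base: "v \<in> G0 \<Longrightarrow> sink v \<Longrightarrow> b \<in> Bs v \<Longrightarrow> (v, b) \<in> BB"
| step: "e \<in> G1 \<Longrightarrow> w \<in> r e \<Longrightarrow> (w, b) \<in> BB \<Longrightarrow> (s e, S e b) \<in> BB"

definition Bv :: "'v \<Rightarrow> 'n set" where "Bv v = {b. (v, b) \<in> BB}"
definition D :: "'v set \<Rightarrow> 'n set" where "D A = (\<Union>v\<in>A. Bv v)"

lemma Bv_G0: "b \<in> Bv v \<Longrightarrow> v \<in> G0"
  unfolding Bv_def by (auto elim: BB.cases simp: se_G0)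

lemma Bv_sink: "sink v \<Longrightarrow> v \<in> G0 \<Longrightarrow> Bv v = Bs v"
  unfolding Bv_def by (auto elim: BB.cases intro: BB.base simp: sink_def)

lemma Bv_emit:
  assumes ns: "\<not> sink v"
  shows "Bv v = (\<Union>e\<in>{e\<in>G1. s e = v}. S e ` D (r e))"
proof
  show "Bv v \<subseteq> (\<Union>e\<in>{e\<in>G1. s e = v}. S e ` D (r e))"
  proof
    fix b assume "b \<in> Bv v"
    then have "(v, b) \<in> BB" by (simp add: Bv_def)
    then show "b \<in> (\<Union>e\<in>{e\<in>G1. s e = v}. S e ` D (r e))"
    proof cases
      case base then show ?thesis using ns by simp
    next
      case (step e w b')
      then have "b' \<in> D (r e)" unfolding D_def Bv_def by blast
      then show ?thesis using step by blast
    qed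
  qed
  show "(\<Union>e\<in>{e\<in>G1. s e = v}. S e ` D (r e)) \<subseteq> Bv v"
    unfolding D_def Bv_def by (auto intro: BB.step)
qed

lemma Rg_sub: "e \<in> G1 \<Longrightarrow> S e ` D (r e) \<subseteq> Bv (s e)"
  unfolding Bv_def D_def by (auto intro: BB.step)

definition good :: "'v \<Rightarrow> bool" where
  "good v \<longleftrightarrow> Bv v \<subseteq> range (P {v}) \<and> \<not> V.dependent (Bv v) \<and> range (P {v}) \<subseteq> V.span (Bv v)"

lemma edge_basis:
  assumes e: "e \<in> G1" and g: "\<forall>w\<in>r e. good w"
  shows "D (r e) \<subseteq> range (P (r e))" "\<not> V.dependent (D (r e))" "range (P (r e)) \<subseteq> V.span (D (r e))"
proof -
  have ds: "internal_direct_sum scale (range (P (r e))) (r e) (\<lambda>v. range (P {v}))" using range_sum e by blast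
  have sub: "\<And>i. i \<in> r e \<Longrightarrow> V.subspace (range (P {i}))"
    using sub_range lP g_v re_G0[OF e] by blast
  have B: "\<And>i. i \<in> r e \<Longrightarrow> Bv i \<subseteq> range (P {i}) \<and> \<not> V.dependent (Bv i) \<and> range (P {i}) \<subseteq> V.span (Bv i)"
    using g unfolding good_def by blast
  note X = V.ds_basis[OF ds sub B]
  show "D (r e) \<subseteq> range (P (r e))" "\<not> V.dependent (D (r e))" "range (P (r e)) \<subseteq> V.span (D (r e))"
    unfolding D_def using X(1-3) by simp_all
qed

lemma S_inj: "e \<in> G1 \<Longrightarrow> inj_on (S e) (range (P (r e)))"
proof (rule inj_onI)
  fix x y assume e: "e \<in> G1" and x: "x \<in> range (P (r e))" and y: "y \<in> range (P (r e))" and eq: "S e x = S e y"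
  have "P (r e) x = Sa e (S e x)" using SaS[OF e e, of x] by simp
  also have "\<dots> = Sa e (S e y)" using eq by simp
  also have "\<dots> = P (r e) y" using SaS[OF e e, of y] by simp
  finally have "P (r e) x = P (r e) y" .
  moreover have "P (r e) x = x" by (rule proj[OF g_r[OF e] x])
  moreover have "P (r e) y = y" by (rule proj[OF g_r[OF e] y])
  ultimately show "x = y" by simp
qed

lemma NE_eq: "e \<in> G1 \<Longrightarrow> range (S e \<circ> Sa e) = S e ` range (P (r e))"
proof
  assume e: "e \<in> G1"
  show "range (S e \<circ> Sa e) \<subseteq> S e ` range (P (r e))"
  proof
    fix z assume "z \<in> range (S e \<circ> Sa e)"
    then obtain y where y: "z = S e (Sa e y)" by auto
    then have "z = S e (P (r e) (Sa e y))" using rel2(3)[OF e] by simp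
    then show "z \<in> S e ` range (P (r e))" by blast
  qed
  show "S e ` range (P (r e)) \<subseteq> range (S e \<circ> Sa e)"
  proof
    fix z assume "z \<in> S e ` range (P (r e))"
    then obtain y where y: "z = S e (P (r e) y)" by blast
    have "(S e \<circ> Sa e) (S e y) = S e (P (r e) y)" using SaS[OF e e] by simp
    then show "z \<in> range (S e \<circ> Sa e)" using y by (metis rangeI)
  qed
qed

lemma image_basis:
  assumes e: "e \<in> G1" and g: "\<forall>w\<in>r e. good w"
  shows "S e ` D (r e) \<subseteq> range (S e \<circ> Sa e)" "\<not> V.dependent (S e ` D (r e))"
    "range (S e \<circ> Sa e) \<subseteq> V.span (S e ` D (r e))"
proof -
  note eb = edge_basis[OF e g]
  have spanR: "V.span (D (r e)) \<subseteq> range (P (r e))"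
    using V.span_minimal[OF eb(1) sub_range[OF lP[OF g_r[OF e]]]] .
  show "S e ` D (r e) \<subseteq> range (S e \<circ> Sa e)" using NE_eq[OF e] image_mono[OF eb(1), of "S e"] by simp
  show "\<not> V.dependent (S e ` D (r e))"
    using module_hom.independent_injective_image[OF lS[OF e] eb(2)] inj_on_subset[OF S_inj[OF e] spanR]
    by blast
  have "range (S e \<circ> Sa e) \<subseteq> S e ` V.span (D (r e))" using NE_eq[OF e] eb(3) by blast
  also have "\<dots> = V.span (S e ` D (r e))" using module_hom.span_image[OF lS[OF e]] by simp
  finally show "range (S e \<circ> Sa e) \<subseteq> V.span (S e ` D (r e))" .
qed

lemma emit_good:
  assumes v: "v \<in> G0" "\<not> sink v" and g: "\<forall>e\<in>G1. s e = v \<longrightarrow> (\<forall>w\<in>r e. good w)"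
  shows "good v" "\<forall>e\<in>G1. \<forall>e'\<in>G1. s e = v \<longrightarrow> s e' = v \<longrightarrow> e \<noteq> e' \<longrightarrow> S e ` D (r e) \<inter> S e' ` D (r e') = {}"
proof -
  have "s -` {v} \<inter> G1 \<noteq> {}" using v unfolding sink_def by blast
  then have ds: "internal_direct_sum scale (range (P {v})) {e\<in>G1. s e = v} (\<lambda>e. range (S e \<circ> Sa e))"
    using source_sum v by blast
  have sub: "\<And>e. e \<in> {e\<in>G1. s e = v} \<Longrightarrow> V.subspace (range (S e \<circ> Sa e))"
    using sub_range module_hom_compose lS lSa by blast
  have B: "\<And>e. e \<in> {e\<in>G1. s e = v} \<Longrightarrow> S e ` D (r e) \<subseteq> range (S e \<circ> Sa e) \<and> \<not> V.dependent (S e ` D (r e)) \<and> range (S e \<circ> Sa e) \<subseteq> V.span (S e ` D (r e))"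
  proof -
    fix e assume "e \<in> {e\<in>G1. s e = v}"
    then have e: "e \<in> G1" "\<forall>w\<in>r e. good w" using g by auto
    show "S e ` D (r e) \<subseteq> range (S e \<circ> Sa e) \<and> \<not> V.dependent (S e ` D (r e)) \<and> range (S e \<circ> Sa e) \<subseteq> V.span (S e ` D (r e))"
      using image_basis[OF e] by blast
  qed
  note X = V.ds_basis[OF ds sub B]
  show "good v" unfolding good_def Bv_emit[OF v(2)] using X(1-3) by simp
  show "\<forall>e\<in>G1. \<forall>e'\<in>G1. s e = v \<longrightarrow> s e' = v \<longrightarrow> e \<noteq> e' \<longrightarrow> S e ` D (r e) \<inter> S e' ` D (r e') = {}"
    using X(4) by simp
qed

lemma edges_good_aux: "\<forall>e. nu e = k \<longrightarrow> e \<in> G1 \<longrightarrow> (\<forall>w\<in>r e. good w)"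
proof (induction k rule: less_induct)
  case (less k)
  show ?case
  proof (intro allI impI ballI)
    fix e w assume ek: "nu e = k" and e: "e \<in> G1" and w: "w \<in> r e"
    then have wG: "w \<in> G0" using re_G0 by blast
    show "good w"
    proof (cases "sink w")
      case True then show ?thesis using Bs Bv_sink wG unfolding good_def by simp
    next
      case False
      have g: "\<forall>e'\<in>G1. s e' = w \<longrightarrow> (\<forall>w\<in>r e'. good w)"
      proof (rule ballI, rule impI)
        fix e' assume e': "e' \<in> G1" "s e' = w"
        have "nu e' < k" using nu_dec[OF e e'(1)] e'(2) w ek by simp
        then show "\<forall>w\<in>r e'. good w" using less e'(1) by blast
      qed
      show ?thesis by (rule emit_good(1)[OF wG False g])
    qed
  qed
qed

lemma edges_good: "e \<in> G1 \<Longrightarrow> \<forall>w\<in>r e. good w"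
  using edges_good_aux by blast

lemma all_good: "v \<in> G0 \<Longrightarrow> good v"
proof (cases "sink v")
  case True
  assume "v \<in> G0" then show ?thesis using Bs Bv_sink True unfolding good_def by simp
next
  case False
  assume v: "v \<in> G0"
  have g: "\<forall>e\<in>G1. s e = v \<longrightarrow> (\<forall>w\<in>r e. good w)" using edges_good by simp
  show ?thesis by (rule emit_good(1)[OF v False g])
qed

lemma Rg_disj: "e \<in> G1 \<Longrightarrow> e' \<in> G1 \<Longrightarrow> e \<noteq> e' \<Longrightarrow> s e = s e' \<Longrightarrow> S e ` D (r e) \<inter> S e' ` D (r e') = {}"
proof -
  assume a: "e \<in> G1" "e' \<in> G1" "e \<noteq> e'" "s e = s e'"
  have ns: "\<not> sink (s e)" using a unfolding sink_def by blast
  have g: "\<forall>f\<in>G1. s f = s e \<longrightarrow> (\<forall>w\<in>r f. good w)" using edges_good by simp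
  show ?thesis using emit_good(2)[OF se_G0[OF a(1)] ns g] a by simp
qed

end



context lpa begin

abbreviation MM where "MM \<equiv> rep_module scale G0 G1 r S Sa P"

lemma P_in_W: "A \<in> gen0 G0 G1 r \<Longrightarrow> P A x \<in> V.span (\<Union>v\<in>G0. range (P {v}))"
proof (induction A arbitrary: x rule: gen0.induct)
  case empty then show ?case using P_empty V.span_zero by simp
next
  case (vert v) then show ?case by (intro V.span_base) blast
next
  case (rng e)
  have "range (P (r e)) = V.span (\<Union>v\<in>r e. range (P {v}))"
    using range_sum rng unfolding internal_direct_sum_def by blast
  also have "\<dots> \<subseteq> V.span (\<Union>v\<in>G0. range (P {v}))"
    using re_G0[OF rng] by (intro V.span_mono) blast
  finally show ?case by blast
next
  case (un A B)
  have "P (A \<union> B) x = P A x + P B x - P (A \<inter> B) x" by (rule Pun[OF un(1,2)])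
  moreover have "P (A \<inter> B) x = P A (P B x)" using PP[OF un(1,2)] by simp
  ultimately show ?case using un V.span_add V.span_diff by metis
next
  case (int A B)
  have "P (A \<inter> B) x = P A (P B x)" using PP[OF int(1,2)] by simp
  then show ?case using int by simp
qed

lemma img_in_W: "a \<in> rep_image scale G0 G1 r S Sa P \<Longrightarrow> a x \<in> V.span (\<Union>v\<in>G0. range (P {v}))"
proof (induction a arbitrary: x rule: rep_image.induct)
  case (gen_s e)
  have "S e x = P {s e} (S e x)" using rel2(1)[OF gen_s] by simp
  then show ?case using P_in_W[OF g_v[OF se_G0[OF gen_s]]] by metis
next
  case (gen_sa e)
  have "Sa e x = P (r e) (Sa e x)" using rel2(3)[OF gen_sa] by simp
  then show ?case using P_in_W[OF g_r[OF gen_sa]] by metis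
next
  case (gen_p A) then show ?case by (rule P_in_W)
next
  case (comp a b) then show ?case by simp
next
  case (add a b) then show ?case using V.span_add by simp
next
  case (smult a c) then show ?case using V.span_scale by simp
qed

lemma M_eq: "MM = V.span (\<Union>v\<in>G0. range (P {v}))"
proof
  show "MM \<subseteq> V.span (\<Union>v\<in>G0. range (P {v}))"
    unfolding rep_module_def using img_in_W by (intro V.span_minimal) auto
  have "(\<Union>v\<in>G0. range (P {v})) \<subseteq> {a x |a x. a \<in> rep_image scale G0 G1 r S Sa P}"
    using rep_image.gen_p[OF g_v] by blast
  then show "V.span (\<Union>v\<in>G0. range (P {v})) \<subseteq> MM"
    unfolding rep_module_def by (rule V.span_mono)
qed

lemma M_ds: "internal_direct_sum scale MM G0 (\<lambda>v. range (P {v}))"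
  unfolding internal_direct_sum_def
proof (intro conjI allI impI)
  show "MM = V.span (\<Union>v\<in>G0. range (P {v}))" by (rule M_eq)
  fix J w assume J: "J \<subseteq> G0" "finite J" and w: "\<forall>i\<in>J. w i \<in> range (P {i})" and su: "sum w J = 0"
  show "\<forall>i\<in>J. w i = 0"
  proof
    fix j assume j: "j \<in> J"
    have "P {j} (sum w J) = (\<Sum>i\<in>J. P {j} (w i))"
      using module_hom.sum[OF lP[OF g_v]] J j by blast
    also have "\<dots> = (\<Sum>i\<in>J. if i = j then w j else 0)"
    proof (rule sum.cong)
      fix i assume i: "i \<in> J"
      obtain y where y: "w i = P {i} y" using w i by blast
      have "P {j} (w i) = P ({j} \<inter> {i}) y" using y PP[OF g_v g_v] J i j by auto
      then show "P {j} (w i) = (if i = j then w j else 0)"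
        using y P_empty by (cases "i = j") auto
    qed simp
    also have "\<dots> = w j" using j J by simp
    finally show "w j = 0" using su module_hom.zero[OF lP[OF g_v]] J j by auto
  qed
qed

lemma N_sub_M: "V.subspace (range (P {v})) \<or> v \<notin> G0"
  using sub_range[OF lP[OF g_v]] by blast

lemma X_basis: "D G0 \<subseteq> MM" "\<not> V.dependent (D G0)" "MM \<subseteq> V.span (D G0)"
  "\<And>v w. v \<in> G0 \<Longrightarrow> w \<in> G0 \<Longrightarrow> v \<noteq> w \<Longrightarrow> Bv v \<inter> Bv w = {}"
proof -
  have sub: "\<And>i. i \<in> G0 \<Longrightarrow> V.subspace (range (P {i}))" using sub_range[OF lP[OF g_v]] by blast
  have B: "\<And>i. i \<in> G0 \<Longrightarrow> Bv i \<subseteq> range (P {i}) \<and> \<not> V.dependent (Bv i) \<and> range (P {i}) \<subseteq> V.span (Bv i)"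
    using all_good unfolding good_def by blast
  note X = V.ds_basis[OF M_ds sub B]
  show "D G0 \<subseteq> MM" "\<not> V.dependent (D G0)" "MM \<subseteq> V.span (D G0)" unfolding D_def using X(1-3) by simp_all
  show "\<And>v w. v \<in> G0 \<Longrightarrow> w \<in> G0 \<Longrightarrow> v \<noteq> w \<Longrightarrow> Bv v \<inter> Bv w = {}" using X(4) by blast
qed

lemma M_span: "MM = V.span (D G0)"
proof
  show "MM \<subseteq> V.span (D G0)" by (rule X_basis(3))
  show "V.span (D G0) \<subseteq> MM" using X_basis(1) unfolding rep_module_def
    by (intro V.span_minimal) auto
qed

lemma Bv_disj: "v \<noteq> w \<Longrightarrow> Bv v \<inter> Bv w = {}"
proof (rule ccontr)
  assume a: "v \<noteq> w" "Bv v \<inter> Bv w \<noteq> {}"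
  then have "v \<in> G0" "w \<in> G0" using Bv_G0 by blast+
  then show False using X_basis(4) a by blast
qed

lemma D_sub: "D A \<subseteq> D G0" unfolding D_def using Bv_G0 by blast

lemma D_single: "D {v} = Bv v" unfolding D_def by simp

lemma D_int: "D A \<inter> D B = D (A \<inter> B)"
proof -
  have "z \<in> D (A \<inter> B)" if z: "z \<in> D A" "z \<in> D B" for z
  proof -
    obtain v where v: "v \<in> A" "z \<in> Bv v" using z(1) unfolding D_def by blast
    obtain w where w: "w \<in> B" "z \<in> Bv w" using z(2) unfolding D_def by blast
    have "v = w"
    proof (rule ccontr)
      assume "v \<noteq> w"
      then have "Bv v \<inter> Bv w = {}" by (rule Bv_disj)
      then show False using v w by blast
    qed
    then show ?thesis using v w unfolding D_def by blast
  qed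
  moreover have "D (A \<inter> B) \<subseteq> D A \<inter> D B" unfolding D_def by blast
  ultimately show ?thesis by blast
qed

lemma D_un: "D A \<union> D B = D (A \<union> B)" unfolding D_def by blast

lemma P_on_X:
  assumes z: "z \<in> D G0" and A: "A \<in> gen0 G0 G1 r"
  shows "P A z = (if z \<in> D A then z else 0)"
proof -
  obtain v where v: "v \<in> G0" "z \<in> Bv v" using z unfolding D_def by blast
  then have "z \<in> range (P {v})" using all_good unfolding good_def by blast
  then obtain y where y: "z = P {v} y" by blast
  have Az: "P A z = P (A \<inter> {v}) y" using PP[OF A g_v[OF v(1)]] y by simp
  show ?thesis
  proof (cases "v \<in> A")
    case True
    then have "A \<inter> {v} = {v}" by blast
    then show ?thesis using Az y True v unfolding D_def by auto
  next
    case False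
    then have "A \<inter> {v} = {}" by blast
    moreover have "z \<notin> D A"
    proof
      assume "z \<in> D A"
      then obtain w where w: "w \<in> A" "z \<in> Bv w" unfolding D_def by blast
      then have "w \<noteq> v" using False by blast
      then show False using Bv_disj[of w v] w v by blast
    qed
    ultimately show ?thesis using Az P_empty by simp
  qed
qed

lemma D_re: "e \<in> G1 \<Longrightarrow> D (r e) \<subseteq> range (P (r e))"
  using edge_basis(1)[OF _ edges_good] by blast

lemma inj_S_D: "e \<in> G1 \<Longrightarrow> inj_on (S e) (D (r e))"
  using inj_on_subset[OF S_inj D_re] by blast

lemma S_on_X:
  assumes e: "e \<in> G1" and z: "z \<in> D G0"
  shows "S e z = (if z \<in> D (r e) then S e z else 0)"
proof -
  have "S e z = S e (P (r e) z)" using rel2(2)[OF e] by simp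
  also have "\<dots> = (if z \<in> D (r e) then S e z else 0)"
    using P_on_X[OF z g_r[OF e]] module_hom.zero[OF lS[OF e]] by simp
  finally show ?thesis .
qed

lemma Sa_on_X:
  assumes e: "e \<in> G1" and z: "z \<in> D G0"
  shows "Sa e z = (if z \<in> S e ` D (r e) then the_inv_into (D (r e)) (S e) z else 0)"
proof -
  have "Sa e z = Sa e (P {s e} z)" using rel2(4)[OF e] by simp
  also have "\<dots> = Sa e (if z \<in> Bv (s e) then z else 0)"
    using P_on_X[OF z g_v[OF se_G0[OF e]]] D_single by simp
  finally have Saz: "Sa e z = Sa e (if z \<in> Bv (s e) then z else 0)" .
  show ?thesis
  proof (cases "z \<in> Bv (s e)")
    case False
    then have "z \<notin> S e ` D (r e)" using Rg_sub[OF e] by blast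
    then show ?thesis using Saz False module_hom.zero[OF lSa[OF e]] by simp
  next
    case True
    have ns: "\<not> sink (s e)" using e unfolding sink_def by blast
    obtain e' b where e': "e' \<in> G1" "s e' = s e" "b \<in> D (r e')" "z = S e' b"
      using True Bv_emit[OF ns] by blast
    show ?thesis
    proof (cases "e' = e")
      case True
      have "Sa e z = P (r e) b" using SaS[OF e e'(1)] e' True by simp
      also have "\<dots> = b" using proj[OF g_r[OF e]] D_re[OF e] e' True by blast
      finally show ?thesis using e' True the_inv_into_f_f[OF inj_S_D[OF e]] by auto
    next
      case False
      have "Sa e z = 0" using SaS[OF e e'(1)] e' False by simp
      moreover have "S e ` D (r e) \<inter> S e' ` D (r e') = {}"
        by (rule Rg_disj[OF e e'(1)]) (use False e' in auto)
      then have "z \<notin> S e ` D (r e)" using e' by blast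
      ultimately show ?thesis by simp
    qed
  qed
qed

lemma main_loc:
  "\<exists>(X :: 'n set) Rg D f (T :: 'n \<Rightarrow> 'n \<Rightarrow> 'r).
     branching_system G0 G1 r s X Rg D f \<and>
     bij_betw T (rep_module scale G0 G1 r S Sa P) (fin_maps X) \<and>
     (\<forall>x\<in>rep_module scale G0 G1 r S Sa P. \<forall>y\<in>rep_module scale G0 G1 r S Sa P.
        T (x + y) = (\<lambda>z. T x z + T y z)) \<and>
     (\<forall>c. \<forall>x\<in>rep_module scale G0 G1 r S Sa P. T (scale c x) = (\<lambda>z. c * T x z)) \<and>
     (\<forall>e\<in>G1. \<forall>x\<in>rep_module scale G0 G1 r S Sa P.
        T (S e x) = ind_s Rg D r f e (T x) \<and> T (Sa e x) = ind_sa D r f e (T x)) \<and>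
     (\<forall>A\<in>gen0 G0 G1 r. \<forall>x\<in>rep_module scale G0 G1 r S Sa P. T (P A x) = ind_p D A (T x))"
proof (intro exI conjI)
  let ?X = "D G0" and ?Rg = "\<lambda>e. S e ` D (r e)" and ?T = "V.representation (D G0)"
  have indep: "\<not> V.dependent ?X" by (rule X_basis(2))
  have Rg_X: "e \<in> G1 \<Longrightarrow> ?Rg e \<subseteq> ?X" for e
    using Rg_sub[of e] D_single[of "s e"] D_sub[of "{s e}"] by blast
  show "branching_system G0 G1 r s ?X ?Rg D S"
    unfolding branching_system_def
  proof (intro conjI ballI impI allI)
    show "\<And>e. e \<in> G1 \<Longrightarrow> ?Rg e \<subseteq> ?X" by (rule Rg_X)
    show "\<And>A. D A \<subseteq> ?X" by (rule D_sub)
    show "\<And>e e'. e \<in> G1 \<Longrightarrow> e' \<in> G1 \<Longrightarrow> e \<noteq> e' \<Longrightarrow> ?Rg e \<inter> ?Rg e' = {}"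
    proof -
      fix e e' assume a: "e \<in> G1" "e' \<in> G1" "e \<noteq> e'"
      show "?Rg e \<inter> ?Rg e' = {}"
      proof (cases "s e = s e'")
        case True then show ?thesis using Rg_disj a by blast
      next
        case False then show ?thesis using Rg_sub[OF a(1)] Rg_sub[OF a(2)] Bv_disj[OF False] by blast
      qed
    qed
    show "D {} = {}" unfolding D_def by simp
    show "\<And>A B. D A \<inter> D B = D (A \<inter> B)" by (rule D_int)
    show "\<And>A B. D A \<union> D B = D (A \<union> B)" by (rule D_un)
    show "\<And>e. e \<in> G1 \<Longrightarrow> ?Rg e \<subseteq> D {s e}" using Rg_sub D_single by simp
    show "\<And>v. v \<in> G0 \<Longrightarrow> 0 < card {e \<in> G1. s e = v} \<Longrightarrow> D {v} = (\<Union>e\<in>{e \<in> G1. s e = v}. ?Rg e)"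
    proof -
      fix v assume "0 < card {e \<in> G1. s e = v}"
      then have "{e \<in> G1. s e = v} \<noteq> {}" by (metis card.empty less_irrefl)
      then have "\<not> sink v" unfolding sink_def by blast
      then show "D {v} = (\<Union>e\<in>{e \<in> G1. s e = v}. ?Rg e)" using Bv_emit D_single by simp
    qed
    show "\<And>e. e \<in> G1 \<Longrightarrow> bij_betw (S e) (D (r e)) (?Rg e)"
      using inj_S_D unfolding bij_betw_def by blast
  qed
  show "bij_betw ?T MM (fin_maps ?X)"
    unfolding bij_betw_def M_span
  proof
    show "inj_on ?T (V.span ?X)"
    proof (rule inj_onI)
      fix x y assume x: "x \<in> V.span ?X" and y: "y \<in> V.span ?X" and eq: "?T x = ?T y"
      have "x = (\<Sum>b | ?T x b \<noteq> 0. scale (?T x b) b)"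
        using V.sum_nonzero_representation_eq[OF indep x] by simp
      also have "\<dots> = (\<Sum>b | ?T y b \<noteq> 0. scale (?T y b) b)" by (simp only: eq)
      also have "\<dots> = y" using V.sum_nonzero_representation_eq[OF indep y] by simp
      finally show "x = y" .
    qed
    show "?T ` V.span ?X = fin_maps ?X"
    proof
      show "?T ` V.span ?X \<subseteq> fin_maps ?X"
        unfolding fin_maps_def using V.representation_ne_zero V.finite_representation by blast
      show "fin_maps ?X \<subseteq> ?T ` V.span ?X"
      proof
        fix \<phi> :: "'n \<Rightarrow> 'r" assume \<phi>: "\<phi> \<in> fin_maps ?X"
        have \<phi>X: "\<And>b. \<phi> b \<noteq> 0 \<Longrightarrow> b \<in> ?X" and \<phi>f: "finite {b. \<phi> b \<noteq> 0}" using \<phi> unfolding fin_maps_def by auto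
        let ?x = "\<Sum>b | \<phi> b \<noteq> 0. scale (\<phi> b) b"
        have xs: "?x \<in> V.span ?X" by (intro V.span_sum V.span_scale V.span_base) (use \<phi>X in auto)
        have "?T ?x = \<phi>" by (rule V.representation_eqI[OF indep xs \<phi>X \<phi>f refl])
        then have "\<phi> = ?T ?x" by simp
        then show "\<phi> \<in> ?T ` V.span ?X" using xs by (rule image_eqI)
      qed
    qed
  qed
  show "\<forall>x\<in>MM. \<forall>y\<in>MM. ?T (x + y) = (\<lambda>z. ?T x z + ?T y z)"
    unfolding M_span by (intro ballI V.representation_add[OF indep])
  show "\<forall>c. \<forall>x\<in>MM. ?T (scale c x) = (\<lambda>z. c * ?T x z)"
    unfolding M_span by (intro allI ballI V.representation_scale[OF indep])
  show "\<forall>e\<in>G1. \<forall>x\<in>MM. ?T (S e x) = ind_s ?Rg D r S e (?T x) \<and> ?T (Sa e x) = ind_sa D r S e (?T x)"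
  proof (intro ballI conjI)
    fix e x assume e: "e \<in> G1" and x: "x \<in> MM"
    then have xs: "x \<in> V.span ?X" using M_span by simp
    show "?T (S e x) = ind_s ?Rg D r S e (?T x)"
      unfolding ind_s_def
      by (rule V.rep_map[OF indep xs lS[OF e] D_sub Rg_X[OF e] inj_S_D[OF e] S_on_X[OF e]])
    let ?h = "the_inv_into (D (r e)) (S e)"
    have hinj: "inj_on ?h (?Rg e)" by (rule inj_on_the_inv_into[OF inj_S_D[OF e]])
    have himg: "?h ` ?Rg e = D (r e)"
      using the_inv_into_f_f[OF inj_S_D[OF e]] by force
    have "?T (Sa e x) = (\<lambda>y. if y \<in> ?h ` ?Rg e then ?T x (the_inv_into (?Rg e) ?h y) else 0)"
      by (rule V.rep_map[OF indep xs lSa[OF e] Rg_X[OF e] _ hinj Sa_on_X[OF e]]) (use himg D_sub in auto)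
    also have "\<dots> = ind_sa D r S e (?T x)"
      unfolding ind_sa_def himg
    proof (rule ext)
      fix y show "(if y \<in> D (r e) then ?T x (the_inv_into (?Rg e) ?h y) else 0) =
          (if y \<in> D (r e) then ?T x (S e y) else 0)"
        using the_inv_into_f_eq[OF hinj, of "S e y" y] the_inv_into_f_f[OF inj_S_D[OF e]] by auto
    qed
    finally show "?T (Sa e x) = ind_sa D r S e (?T x)" .
  qed
  show "\<forall>A\<in>gen0 G0 G1 r. \<forall>x\<in>MM. ?T (P A x) = ind_p D A (?T x)"
  proof (intro ballI)
    fix A x assume A: "A \<in> gen0 G0 G1 r" and x: "x \<in> MM"
    then have xs: "x \<in> V.span ?X" using M_span by simp
    have "?T (P A x) = (\<lambda>y. if y \<in> (\<lambda>z. z) ` D A then ?T x (the_inv_into (D A) (\<lambda>z. z) y) else 0)"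
      by (rule V.rep_map[OF indep xs lP[OF A] D_sub _ inj_on_id2]) (use D_sub P_on_X[OF _ A] in auto)
    also have "\<dots> = ind_p D A (?T x)"
      unfolding ind_p_def by (rule ext) (auto simp: the_inv_into_f_f[OF inj_on_id2])
    finally show "?T (P A x) = ind_p D A (?T x)" .
  qed
qed

end

theorem mainTheorem10:
  fixes G0 :: "'v set" and G1 :: "'e set" and r :: "'e \<Rightarrow> 'v set" and s :: "'e \<Rightarrow> 'v"
    and scale :: "'r::field \<Rightarrow> 'n::ab_group_add \<Rightarrow> 'n"
    and S Sa :: "'e \<Rightarrow> 'n \<Rightarrow> 'n" and P :: "'v set \<Rightarrow> 'n \<Rightarrow> 'n"
    and n :: nat
  assumes ug: "ultragraph G0 G1 r s"
    and n1: "n \<ge> 1"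
    and Xne: "\<forall>i\<in>{1..n}. Xk G0 G1 r s i \<noteq> {}"
    and cover: "(\<Union>e\<in>G1. r e) \<union> s ` G1 = (\<Union>i\<in>{1..n}. \<Union>(Xk G0 G1 r s i) \<union> Ik G0 G1 r s i)"
    and vs: "vector_space scale"
    and rep: "lpa_rep scale G0 G1 r s S Sa P"
    and range_sum: "\<forall>e\<in>G1. internal_direct_sum scale (range (P (r e))) (r e) (\<lambda>v. range (P {v}))"
    and source_sum: "\<forall>v\<in>G0. s -` {v} \<inter> G1 \<noteq> {} \<longrightarrow>
        internal_direct_sum scale (range (P {v})) {e\<in>G1. s e = v} (\<lambda>e. range (S e \<circ> Sa e))"
  shows "\<exists>(X :: 'n set) Rg D f (T :: 'n \<Rightarrow> 'n \<Rightarrow> 'r).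
     branching_system G0 G1 r s X Rg D f \<and>
     bij_betw T (rep_module scale G0 G1 r S Sa P) (fin_maps X) \<and>
     (\<forall>x\<in>rep_module scale G0 G1 r S Sa P. \<forall>y\<in>rep_module scale G0 G1 r S Sa P.
        T (x + y) = (\<lambda>z. T x z + T y z)) \<and>
     (\<forall>c. \<forall>x\<in>rep_module scale G0 G1 r S Sa P. T (scale c x) = (\<lambda>z. c * T x z)) \<and>
     (\<forall>e\<in>G1. \<forall>x\<in>rep_module scale G0 G1 r S Sa P.
        T (S e x) = ind_s Rg D r f e (T x) \<and> T (Sa e x) = ind_sa D r f e (T x)) \<and>
     (\<forall>A\<in>gen0 G0 G1 r. \<forall>x\<in>rep_module scale G0 G1 r S Sa P. T (P A x) = ind_p D A (T x))"
proof -
  have gone: "\<And>e. e \<in> G1 \<Longrightarrow> e \<notin> snd (stage G0 G1 r s n)" using all_gone[OF cover] by blast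
  interpret lpa G0 G1 r s scale S Sa P "nuA G0 G1 r s n"
    by (rule lpa.intro[OF ug vs rep range_sum source_sum]) (rule nuA_dec[OF gone])
  show ?thesis by (rule main_loc)
qed

end
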